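(* Let $1,2,3,4$ be four distinct vertices of $G$ such that $G[\{1,2,3,4\}]$ has edge set exactly $\{12,23,24,34\}$ and $w_{23}\ge w_{24}$. If $\Gamma_G$ is population monotonic, then $w_{23}\ge w_{12}+w_{34}$ and $w_{23}\ge w_{24}+w_{34}$.
   Context: $G=(V,E;w)$ is a finite simple graph with edge weights $w:E\to\mathbb{R}$, $w_e>0$ for all $e\in E$; $w_{ij}$ denotes the weight of edge $ij$. The matching game on $G$ is the cooperative game $\Gamma_G=(N,\gamma)$ with player set $N=V$ and, for $S\subseteq N$, $\gamma(S)$ equal to the maximum weight of a matching in the induced subgraph $G[S]$ (so $\gamma(\emptyset)=0$). A population monotonic allocation scheme (PMAS) is a family $(\boldsymbol{x}_S)_{\emptyset\neq S\subseteq N}$ with $\boldsymbol{x}_S=(x_{S,i})_{i\in S}\in\mathbb{R}^S$ such that (efficiency) $\sum_{i\in S}x_{S,i}=\gamma(S)$ for every nonempty $S\subseteq N$, and (monotonicity) $x_{S,i}\le x_{T,i}$ whenever $\emptyset\ne S\subseteq T\subseteq N$ and $i\in S$. $\Gamma_G$ is called population monotonic if it admits a PMAS. *)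

theory Defs
  imports Complex_Main
begin

definition simple_graph :: "'a set \<Rightarrow> 'a set set \<Rightarrow> bool" where
  "simple_graph V E \<longleftrightarrow> finite V \<and> (\<forall>e\<in>E. e \<subseteq> V \<and> card e = 2)"

definition matching_in :: "'a set set \<Rightarrow> 'a set \<Rightarrow> 'a set set \<Rightarrow> bool" where
  "matching_in E S M \<longleftrightarrow> M \<subseteq> E \<and> (\<forall>e\<in>M. e \<subseteq> S) \<and>
     (\<forall>e\<in>M. \<forall>f\<in>M. e \<noteq> f \<longrightarrow> e \<inter> f = {})"

definition gamma :: "'a set set \<Rightarrow> ('a set \<Rightarrow> real) \<Rightarrow> 'a set \<Rightarrow> real" where
  "gamma E w S = Max ((\<lambda>M. \<Sum>e\<in>M. w e) ` {M. matching_in E S M})"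

text \<open>Population monotonic allocation scheme for the game (V, gamma E w):
x S i is the payoff of player i in coalition S.\<close>

definition is_PMAS :: "'a set \<Rightarrow> 'a set set \<Rightarrow> ('a set \<Rightarrow> real) \<Rightarrow> ('a set \<Rightarrow> 'a \<Rightarrow> real) \<Rightarrow> bool" where
  "is_PMAS V E w x \<longleftrightarrow>
     (\<forall>S. S \<subseteq> V \<and> S \<noteq> {} \<longrightarrow> (\<Sum>i\<in>S. x S i) = gamma E w S) \<and>
     (\<forall>S T i. S \<noteq> {} \<and> S \<subseteq> T \<and> T \<subseteq> V \<and> i \<in> S \<longrightarrow> x S i \<le> x T i)"

definition population_monotonic :: "'a set \<Rightarrow> 'a set set \<Rightarrow> ('a set \<Rightarrow> real) \<Rightarrow> bool" where
  "population_monotonic V E w \<longleftrightarrow> (\<exists>x. is_PMAS V E w x)"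

end

theory Submission
  imports Defs
begin

lemma matchings_finite:
  assumes "finite E"
  shows "finite {M. matching_in E S M}"
  by (rule finite_subset[of _ "Pow E"]) (auto simp: matching_in_def assms)

lemma gamma_lower:
  assumes "finite E" "matching_in E S M"
  shows "sum w M \<le> gamma E w S"
  unfolding gamma_def
  using assms matchings_finite[OF assms(1), of S] by (intro Max_ge) auto

lemma gamma_upper:
  assumes "finite E" "\<And>M. matching_in E S M \<Longrightarrow> P (sum w M)"
  shows "P (gamma E w S)"
proof -
  have ne: "matching_in E S {}" by (simp add: matching_in_def)
  have "gamma E w S \<in> (\<lambda>M. \<Sum>e\<in>M. w e) ` {M. matching_in E S M}"
    unfolding gamma_def using matchings_finite[OF assms(1), of S] ne
    by (intro Max_in) auto
  then show ?thesis using assms(2) by auto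
qed

lemma sub2: "M \<subseteq> {A,B} \<Longrightarrow> \<not> (A \<in> M \<and> B \<in> M) \<Longrightarrow> M = {} \<or> M = {A} \<or> M = {B}"
  by blast

lemma sub3: "M \<subseteq> {A,B,C} \<Longrightarrow> \<not> (A \<in> M \<and> B \<in> M) \<Longrightarrow> \<not> (A \<in> M \<and> C \<in> M)
  \<Longrightarrow> \<not> (B \<in> M \<and> C \<in> M) \<Longrightarrow> M = {} \<or> M = {A} \<or> M = {B} \<or> M = {C}"
  by blast

lemma sub1: "M \<subseteq> {A} \<Longrightarrow> M = {} \<or> M = {A}"
  by blast

theorem mainTheorem6:
  fixes V :: "'a set" and E :: "'a set set" and w :: "'a set \<Rightarrow> real"
    and v1 v2 v3 v4 :: 'a
  assumes G: "simple_graph V E"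
    and wpos: "\<forall>e\<in>E. w e > 0"
    and verts: "{v1, v2, v3, v4} \<subseteq> V"
    and dist: "distinct [v1, v2, v3, v4]"
    and induced: "{e \<in> E. e \<subseteq> {v1, v2, v3, v4}} = {{v1,v2}, {v2,v3}, {v2,v4}, {v3,v4}}"
    and w23: "w {v2,v3} \<ge> w {v2,v4}"
    and pm: "population_monotonic V E w"
  shows "w {v2,v3} \<ge> w {v1,v2} + w {v3,v4} \<and> w {v2,v3} \<ge> w {v2,v4} + w {v3,v4}"
proof -
  obtain x where x: "is_PMAS V E w x" using pm unfolding population_monotonic_def by blast
  have finE: "finite E"
  proof -
    have "E \<subseteq> Pow V" using G unfolding simple_graph_def by auto
    moreover have "finite V" using G unfolding simple_graph_def by auto
    ultimately show ?thesis by (meson finite_Pow_iff finite_subset)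
  qed
  have eff: "\<And>S. S \<subseteq> V \<Longrightarrow> S \<noteq> {} \<Longrightarrow> (\<Sum>i\<in>S. x S i) = gamma E w S"
    using x unfolding is_PMAS_def by blast
  have mono: "\<And>S T i. S \<noteq> {} \<Longrightarrow> S \<subseteq> T \<Longrightarrow> T \<subseteq> V \<Longrightarrow> i \<in> S \<Longrightarrow> x S i \<le> x T i"
    using x unfolding is_PMAS_def by blast
  define N where "N = {v1, v2, v3, v4}"
  have ind: "\<And>M S. matching_in E S M \<Longrightarrow> S \<subseteq> N \<Longrightarrow>
     M \<subseteq> {e \<in> {{v1,v2}, {v2,v3}, {v2,v4}, {v3,v4}}. e \<subseteq> S}"
  proof -
    fix M S assume m: "matching_in E S M" and s: "S \<subseteq> N"
    have "M \<subseteq> {e \<in> E. e \<subseteq> {v1, v2, v3, v4}} \<inter> {e. e \<subseteq> S}"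
      using m s unfolding matching_in_def N_def by blast
    then have "M \<subseteq> {{v1,v2}, {v2,v3}, {v2,v4}, {v3,v4}} \<inter> {e. e \<subseteq> S}"
      unfolding induced .
    then show "M \<subseteq> {e \<in> {{v1,v2}, {v2,v3}, {v2,v4}, {v3,v4}}. e \<subseteq> S}"
      by blast
  qed
  have disj: "\<And>M S e f. matching_in E S M \<Longrightarrow> e \<in> M \<Longrightarrow> f \<in> M \<Longrightarrow> e \<noteq> f \<Longrightarrow> e \<inter> f = {}"
    unfolding matching_in_def by blast
  have inE0: "{{v1,v2}, {v2,v3}, {v2,v4}, {v3,v4}} \<subseteq> E"
  proof -
    have "{{v1,v2}, {v2,v3}, {v2,v4}, {v3,v4}} \<subseteq> {e \<in> E. e \<subseteq> {v1, v2, v3, v4}}"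
      unfolding induced by (rule subset_refl)
    then show ?thesis by blast
  qed
  have inE: "{v1,v2} \<in> E" "{v2,v3} \<in> E" "{v2,v4} \<in> E" "{v3,v4} \<in> E"
    using inE0 by simp_all
  define a where "a = w {v1,v2}"
  define b where "b = w {v2,v3}"
  define c where "c = w {v2,v4}"
  define d where "d = w {v3,v4}"
  have pos: "a > 0" "b > 0" "c > 0" "d > 0"
    using wpos inE unfolding a_def b_def c_def d_def by auto
  have single: "matching_in E S {e}" if "e \<in> E" "e \<subseteq> S" for e S
    using that unfolding matching_in_def by auto
  have d12: "v1 \<noteq> v2" "v1 \<noteq> v3" "v1 \<noteq> v4" "v2 \<noteq> v3" "v2 \<noteq> v4" "v3 \<noteq> v4"
    using dist by auto
  have d21: "v2 \<noteq> v1" "v3 \<noteq> v1" "v4 \<noteq> v1" "v3 \<noteq> v2" "v4 \<noteq> v2" "v4 \<noteq> v3"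
    using dist by auto
  have NV: "N \<subseteq> V" using verts N_def by simp
  have lo12: "a \<le> gamma E w {v1,v2}" using gamma_lower[OF finE single[OF inE(1)]] a_def by auto
  have lo23: "b \<le> gamma E w {v2,v3}" using gamma_lower[OF finE single[OF inE(2)]] b_def by auto
  have lo24: "c \<le> gamma E w {v2,v4}" using gamma_lower[OF finE single[OF inE(3)]] c_def by auto
  have lo34: "d \<le> gamma E w {v3,v4}" using gamma_lower[OF finE single[OF inE(4)]] d_def by auto
  have lo123: "a \<le> gamma E w {v1,v2,v3}" "b \<le> gamma E w {v1,v2,v3}"
    using gamma_lower[OF finE single[OF inE(1)], of "{v1,v2,v3}" w]
      gamma_lower[OF finE single[OF inE(2)], of "{v1,v2,v3}" w] a_def b_def by auto
  have lo124: "a \<le> gamma E w {v1,v2,v4}" "c \<le> gamma E w {v1,v2,v4}"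
    using gamma_lower[OF finE single[OF inE(1)], of "{v1,v2,v4}" w]
      gamma_lower[OF finE single[OF inE(3)], of "{v1,v2,v4}" w] a_def c_def by auto
  have lo234: "b \<le> gamma E w {v2,v3,v4}" "c \<le> gamma E w {v2,v3,v4}" "d \<le> gamma E w {v2,v3,v4}"
    using gamma_lower[OF finE single[OF inE(2)], of "{v2,v3,v4}" w]
      gamma_lower[OF finE single[OF inE(3)], of "{v2,v3,v4}" w]
      gamma_lower[OF finE single[OF inE(4)], of "{v2,v3,v4}" w] b_def c_def d_def by auto
  have upS: "gamma E w S \<le> 0" if "S \<subseteq> N" "\<forall>e \<in> {{v1,v2}, {v2,v3}, {v2,v4}, {v3,v4}}. \<not> e \<subseteq> S" for S
  proof (rule gamma_upper[OF finE])
    fix M assume m: "matching_in E S M"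
    have "M = {}"
    proof (rule ccontr)
      assume "M \<noteq> {}"
      then obtain e where e: "e \<in> M" by blast
      have "e \<in> {e \<in> {{v1,v2}, {v2,v3}, {v2,v4}, {v3,v4}}. e \<subseteq> S}"
        using ind[OF m that(1)] e by (rule subsetD)
      then have "e \<in> {{v1,v2}, {v2,v3}, {v2,v4}, {v3,v4}}" "e \<subseteq> S" by simp_all
      then show False using that(2) by blast
    qed
    then show "sum w M \<le> 0" by simp
  qed
  have up1: "gamma E w {v1} \<le> 0" by (rule upS) (simp_all add: N_def d12 d21)
  have up2: "gamma E w {v2} \<le> 0" by (rule upS) (simp_all add: N_def d12 d21)
  have up3: "gamma E w {v3} \<le> 0" by (rule upS) (simp_all add: N_def d12 d21)
  have up4: "gamma E w {v4} \<le> 0" by (rule upS) (simp_all add: N_def d12 d21)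
  have up13: "gamma E w {v1,v3} \<le> 0" by (rule upS) (use d12 d21 in \<open>simp_all add: N_def\<close>)
  have up14: "gamma E w {v1,v4} \<le> 0" by (rule upS) (use d12 d21 in \<open>simp_all add: N_def\<close>)
  have up2e: "gamma E w S = 0 \<or> gamma E w S = w A \<or> gamma E w S = w B"
    if "S \<subseteq> N" "\<forall>e \<in> {{v1,v2}, {v2,v3}, {v2,v4}, {v3,v4}}. e \<subseteq> S \<longrightarrow> e = A \<or> e = B"
       "A \<inter> B \<noteq> {}" "A \<noteq> B" for S A B
  proof (rule gamma_upper[OF finE])
    fix M assume m: "matching_in E S M"
    have "M \<subseteq> {A,B}"
    proof
      fix e assume e: "e \<in> M"
      have "e \<in> {e \<in> {{v1,v2}, {v2,v3}, {v2,v4}, {v3,v4}}. e \<subseteq> S}"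
        using ind[OF m that(1)] e by (rule subsetD)
      then have e1: "e \<in> {{v1,v2}, {v2,v3}, {v2,v4}, {v3,v4}}" and e2: "e \<subseteq> S"
        by simp_all
      have "e = A \<or> e = B" using bspec[OF that(2) e1] e2 by (rule mp)
      then show "e \<in> {A,B}" by simp
    qed
    moreover have "\<not> (A \<in> M \<and> B \<in> M)" using disj[OF m] that(3,4) by blast
    ultimately have "M = {} \<or> M = {A} \<or> M = {B}" by (rule sub2)
    then show "sum w M = 0 \<or> sum w M = w A \<or> sum w M = w B" by auto
  qed
  have up123: "gamma E w {v1,v2,v3} = 0 \<or> gamma E w {v1,v2,v3} = a \<or> gamma E w {v1,v2,v3} = b"
    unfolding a_def b_def
    by (rule up2e) (use d12 d21 in \<open>auto simp: N_def doubleton_eq_iff\<close>)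
  have up124: "gamma E w {v1,v2,v4} = 0 \<or> gamma E w {v1,v2,v4} = a \<or> gamma E w {v1,v2,v4} = c"
    unfolding a_def c_def
    by (rule up2e) (use d12 d21 in \<open>auto simp: N_def doubleton_eq_iff\<close>)
  have up234: "gamma E w {v2,v3,v4} = 0 \<or> gamma E w {v2,v3,v4} = b \<or> gamma E w {v2,v3,v4} = c \<or> gamma E w {v2,v3,v4} = d"
  proof (rule gamma_upper[OF finE])
    fix M assume m: "matching_in E {v2,v3,v4} M"
    have S: "{v2,v3,v4} \<subseteq> N" by (auto simp: N_def)
    have "M \<subseteq> {{v2,v3},{v2,v4},{v3,v4}}"
    proof
      fix e assume e: "e \<in> M"
      have "e \<in> {e \<in> {{v1,v2}, {v2,v3}, {v2,v4}, {v3,v4}}. e \<subseteq> {v2,v3,v4}}"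
        using ind[OF m S] e by (rule subsetD)
      then have e1: "e \<in> {{v1,v2}, {v2,v3}, {v2,v4}, {v3,v4}}" and e2: "e \<subseteq> {v2,v3,v4}"
        by simp_all
      have "e \<noteq> {v1,v2}" using e2 d12 by auto
      then show "e \<in> {{v2,v3},{v2,v4},{v3,v4}}" using e1 by simp
    qed
    moreover have "\<not> ({v2,v3} \<in> M \<and> {v2,v4} \<in> M)"
      using disj[OF m, of "{v2,v3}" "{v2,v4}"] d12 d21 by (auto simp: doubleton_eq_iff)
    moreover have "\<not> ({v2,v3} \<in> M \<and> {v3,v4} \<in> M)"
      using disj[OF m, of "{v2,v3}" "{v3,v4}"] d12 d21 by (auto simp: doubleton_eq_iff)
    moreover have "\<not> ({v2,v4} \<in> M \<and> {v3,v4} \<in> M)"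
      using disj[OF m, of "{v2,v4}" "{v3,v4}"] d12 d21 by (auto simp: doubleton_eq_iff)
    ultimately have "M = {} \<or> M = {{v2,v3}} \<or> M = {{v2,v4}} \<or> M = {{v3,v4}}"
      by (rule sub3)
    then show "sum w M = 0 \<or> sum w M = b \<or> sum w M = c \<or> sum w M = d"
      unfolding b_def c_def d_def by auto
  qed
  have ef12: "x {v1,v2} v1 + x {v1,v2} v2 = gamma E w {v1,v2}"
    using eff[of "{v1,v2}"] NV d12 d21 by (simp add: N_def add.assoc)
  have ef23: "x {v2,v3} v2 + x {v2,v3} v3 = gamma E w {v2,v3}"
    using eff[of "{v2,v3}"] NV d12 d21 by (simp add: N_def add.assoc)
  have ef24: "x {v2,v4} v2 + x {v2,v4} v4 = gamma E w {v2,v4}"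
    using eff[of "{v2,v4}"] NV d12 d21 by (simp add: N_def add.assoc)
  have ef34: "x {v3,v4} v3 + x {v3,v4} v4 = gamma E w {v3,v4}"
    using eff[of "{v3,v4}"] NV d12 d21 by (simp add: N_def add.assoc)
  have ef123: "x {v1,v2,v3} v1 + x {v1,v2,v3} v2 + x {v1,v2,v3} v3 = gamma E w {v1,v2,v3}"
    using eff[of "{v1,v2,v3}"] NV d12 d21 by (simp add: N_def add.assoc)
  have ef124: "x {v1,v2,v4} v1 + x {v1,v2,v4} v2 + x {v1,v2,v4} v4 = gamma E w {v1,v2,v4}"
    using eff[of "{v1,v2,v4}"] NV d12 d21 by (simp add: N_def add.assoc)
  have ef234: "x {v2,v3,v4} v2 + x {v2,v3,v4} v3 + x {v2,v3,v4} v4 = gamma E w {v2,v3,v4}"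
    using eff[of "{v2,v3,v4}"] NV d12 d21 by (simp add: N_def add.assoc)
  have m12_123_1: "x {v1,v2} v1 \<le> x {v1,v2,v3} v1"
    by (rule mono) (use NV in \<open>auto simp: N_def\<close>)
  have m12_123_2: "x {v1,v2} v2 \<le> x {v1,v2,v3} v2"
    by (rule mono) (use NV in \<open>auto simp: N_def\<close>)
  have m23_123_3: "x {v2,v3} v3 \<le> x {v1,v2,v3} v3"
    by (rule mono) (use NV in \<open>auto simp: N_def\<close>)
  have m23_234_2: "x {v2,v3} v2 \<le> x {v2,v3,v4} v2"
    by (rule mono) (use NV in \<open>auto simp: N_def\<close>)
  have m34_234_3: "x {v3,v4} v3 \<le> x {v2,v3,v4} v3"
    by (rule mono) (use NV in \<open>auto simp: N_def\<close>)
  have m34_234_4: "x {v3,v4} v4 \<le> x {v2,v3,v4} v4"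
    by (rule mono) (use NV in \<open>auto simp: N_def\<close>)
  have m12_124_1: "x {v1,v2} v1 \<le> x {v1,v2,v4} v1"
    by (rule mono) (use NV in \<open>auto simp: N_def\<close>)
  have m12_124_2: "x {v1,v2} v2 \<le> x {v1,v2,v4} v2"
    by (rule mono) (use NV in \<open>auto simp: N_def\<close>)
  have m24_124_4: "x {v2,v4} v4 \<le> x {v1,v2,v4} v4"
    by (rule mono) (use NV in \<open>auto simp: N_def\<close>)
  have m23_234_3: "x {v2,v3} v3 \<le> x {v2,v3,v4} v3"
    by (rule mono) (use NV in \<open>auto simp: N_def\<close>)
  have m24_234_2: "x {v2,v4} v2 \<le> x {v2,v3,v4} v2"
    by (rule mono) (use NV in \<open>auto simp: N_def\<close>)
  have m24_234_4: "x {v2,v4} v4 \<le> x {v2,v3,v4} v4"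
    by (rule mono) (use NV in \<open>auto simp: N_def\<close>)
  have g1: "b \<ge> a + d"
    using ef12 ef23 ef34 ef123 ef234 m12_123_1 m12_123_2 m23_123_3 m23_234_2 m34_234_3 m34_234_4
      lo12 lo23 lo34 lo123 lo234 up123 up234 pos w23 unfolding a_def b_def c_def d_def by linarith
  have g2: "b \<ge> c + d"
    using ef12 ef23 ef24 ef34 ef124 ef234 m12_124_1 m12_124_2 m24_124_4 m23_234_2 m23_234_3 m24_234_2
      m24_234_4 m34_234_3 m34_234_4
      lo12 lo23 lo24 lo34 lo124 lo234 up124 up234 pos w23 unfolding a_def b_def c_def d_def by linarith
  show ?thesis using g1 g2 unfolding a_def b_def c_def d_def by simp
qed

end
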